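(* Assume that $M_0$ is compact and is a global attractor for $F$, i.e. $M_0$ is an attractor for $F$ and $\omega(x)\subset M_0$ for every $x\in M$. Let $\varepsilon_n\downarrow0$, and for each $n$ let $\mu_n$ be a QSD for $p^{\varepsilon_n}$ with eigenvalue $\lambda_n$. If $\mu_n\to\mu$ weakly as Borel probability measures on $M$, then $\mu(M_0)=1$.
   Context: Setting. Let $M\subset\mathbb{R}^d$ be closed; all topological notions are relative to $M$. Let $F:M\to M$ be continuous with $\|F\|:=\sup_{x\in M}\|F(x)\|<\infty$. For $A\subset M$ and $\delta>0$, put $N^\delta(A)=\{x\in M:\inf_{y\in A}\|x-y\|<\delta\}$. Let $\{X^\varepsilon\}_{\varepsilon>0}$ be a family of time-homogeneous Markov chains on $M$ with transition kernels $p^\varepsilon(x,\Gamma)$. The following standing hypotheses are assumed. (SH1) For every $\delta>0$, $\beta_\delta(\varepsilon):=\sup_{x\in M}p^\varepsilon(x,M\setminus N^\delta(F(x)))\to0$ as $\varepsilon\to0$. (SH2) $M=M_0\cup M_1$ (disjoint), where $M_0$ is closed, $F(M_0)\subseteq M_0$, $F(M_1)\subseteq M_1$, and $p^\varepsilon(x,M_1)=0$ for all $\varepsilon>0$ and $x\in M_0$. QSD. A Borel probability measure $\mu_\varepsilon$ on $M_1$ is a quasi-stationary distribution (QSD) for $p^\varepsilon$ if there is $\lambda_\varepsilon\in(0,1)$ with $\int_{M_1}p^\varepsilon(x,\Gamma)\,\mu_\varepsilon(dx)=\lambda_\varepsilon\mu_\varepsilon(\Gamma)$ for all Borel $\Gamma\subset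 M_1$. Attractor. A compact set $A$ is an attractor for $F$ if there is an open neighborhood $U$ of $A$ with $\bigcap_{n\ge1}F^n(U)=A$ and such that for every open $V\supset A$ there is $n(V)$ with $F^n(U)\subset V$ for all $n\ge n(V)$. The set $\omega(x)=\bigcap_{n\ge1}\overline{\{F^p(x):p\ge n\}}$ is the $\omega$-limit set of $x$. *)

theory Defs
  imports "HOL-Probability.Probability"
begin

definition nbhd :: "'a::euclidean_space set \<Rightarrow> real \<Rightarrow> 'a set \<Rightarrow> 'a set" where
  "nbhd M \<delta> A = {x \<in> M. (\<exists>y\<in>A. norm (x - y) < \<delta>)}"

text \<open>Borel probability measure on M (represented as a Borel measure on the ambient space
  giving full mass to M).\<close>
definition borel_prob_on :: "'a::euclidean_space set \<Rightarrow> 'a measure \<Rightarrow> bool" where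
  "borel_prob_on S \<mu> \<longleftrightarrow> prob_space \<mu> \<and> sets \<mu> = sets borel \<and> measure \<mu> S = 1"

definition markov_kernels_on :: "'a::euclidean_space set \<Rightarrow> (real \<Rightarrow> 'a \<Rightarrow> 'a measure) \<Rightarrow> bool" where
  "markov_kernels_on M p \<longleftrightarrow>
     (\<forall>\<epsilon>>0. (\<forall>x\<in>M. borel_prob_on M (p \<epsilon> x)) \<and>
       (\<forall>\<Gamma>\<in>sets borel. (\<lambda>x. measure (p \<epsilon> x) \<Gamma>) \<in> borel_measurable (restrict_space borel M)))"

definition is_QSD :: "'a::euclidean_space set \<Rightarrow> ('a \<Rightarrow> 'a measure) \<Rightarrow> 'a measure \<Rightarrow> real \<Rightarrow> bool" where
  "is_QSD M1 q \<mu> lam \<longleftrightarrow> borel_prob_on M1 \<mu> \<and> 0 < lam \<and> lam < 1 \<and>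
     (\<forall>\<Gamma>\<in>sets borel. \<Gamma> \<subseteq> M1 \<longrightarrow>
        (LINT x:M1|\<mu>. measure (q x) \<Gamma>) = lam * measure \<mu> \<Gamma>)"

definition is_attractor :: "'a::euclidean_space set \<Rightarrow> ('a \<Rightarrow> 'a) \<Rightarrow> 'a set \<Rightarrow> bool" where
  "is_attractor M F A \<longleftrightarrow> compact A \<and> A \<subseteq> M \<and>
     (\<exists>U. openin (top_of_set M) U \<and> A \<subseteq> U \<and>
        (\<Inter>n\<in>{1..}. (F ^^ n) ` U) = A \<and>
        (\<forall>V. openin (top_of_set M) V \<and> A \<subseteq> V \<longrightarrow>
           (\<exists>N. \<forall>n\<ge>N. (F ^^ n) ` U \<subseteq> V)))"

text \<open>omega-limit set; closure relative to M (M is closed, so this is the usual closure).\<close>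
definition omega_limit :: "'a::euclidean_space set \<Rightarrow> ('a \<Rightarrow> 'a) \<Rightarrow> 'a \<Rightarrow> 'a set" where
  "omega_limit M F x = (\<Inter>n\<in>{1..}. M \<inter> closure {(F ^^ k) x | k. k \<ge> n})"

definition weak_conv_on :: "'a::euclidean_space set \<Rightarrow> (nat \<Rightarrow> 'a measure) \<Rightarrow> 'a measure \<Rightarrow> bool" where
  "weak_conv_on M \<mu>s \<mu> \<longleftrightarrow>
     (\<forall>f :: 'a \<Rightarrow> real. continuous_on M f \<and> bounded (f ` M) \<longrightarrow>
        (\<lambda>n. (LINT x:M|\<mu>s n. f x)) \<longlonglongrightarrow> (LINT x:M|\<mu>. f x))"

end

theory Submission
  imports Defs
begin


lemma funpow_in: "F ` M \<subseteq> M \<Longrightarrow> x \<in> M \<Longrightarrow> (F ^^ n) x \<in> M"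
proof (induction n)
  case 0 then show ?case by simp
next
  case (Suc n) then show ?case by (simp add: image_subset_iff)
qed
lemma funpow_cont: "continuous_on M F \<Longrightarrow> F ` M \<subseteq> M \<Longrightarrow> continuous_on M (F ^^ n)"
proof (induction n)
  case 0 show ?case unfolding funpow.simps(1) id_def by (rule continuous_on_id)
next
  case (Suc n)
  have a: "(F ^^ n) ` M \<subseteq> M" by (rule image_subsetI, rule funpow_in[OF Suc.prems(2)])
  have b: "continuous_on ((F ^^ n) ` M) F" using Suc.prems(1) a by (rule continuous_on_subset)
  have c: "continuous_on M (F ^^ n)" by (rule Suc.IH[OF Suc.prems])
  have "continuous_on M (F \<circ> (F ^^ n))" using c b by (rule continuous_on_compose)
  then show ?case by simp
qed
lemma orbit_enters:
  fixes M :: "'a::euclidean_space set"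
  assumes Mc: "closed M" and FM: "F ` M \<subseteq> M" and Fb: "bounded (F ` M)"
    and Ob: "open Ob" and M0O: "M0 \<subseteq> Ob"
    and glob: "\<And>x. x \<in> M \<Longrightarrow> omega_limit M F x \<subseteq> M0" and x: "x \<in> M"
  shows "\<exists>m. (F ^^ m) x \<in> Ob"
proof (rule ccontr)
  assume nO: "\<not> (\<exists>m. (F ^^ m) x \<in> Ob)"
  define K where "K = closure (F ` M)"
  have cK: "compact K" unfolding K_def compact_eq_bounded_closed using Fb by (simp add: bounded_closure)
  have KM: "K \<subseteq> M" unfolding K_def by (rule closure_minimal[OF FM Mc])
  define s where "s m = (F ^^ Suc m) x" for m
  have s_in: "s m \<in> K - Ob" for m
  proof -
    have e: "s m = F ((F ^^ m) x)" unfolding s_def by (simp only: funpow.simps comp_def)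
    have mm: "(F ^^ m) x \<in> M" by (rule funpow_in[OF FM x])
    have "s m \<in> F ` M" unfolding e by (rule imageI[OF mm])
    then have "s m \<in> K" unfolding K_def by (rule subsetD[OF closure_subset])
    moreover have "s m \<notin> Ob" using nO unfolding s_def by blast
    ultimately show ?thesis by blast
  qed
  have "compact (K - Ob)" by (rule compact_diff[OF cK Ob])
  then obtain l r where l: "l \<in> K - Ob" and r: "strict_mono r" and lim: "(s \<circ> r) \<longlonglongrightarrow> l"
    using s_in compact_imp_seq_compact[OF \<open>compact (K - Ob)\<close>] unfolding seq_compact_def by meson
  have "l \<in> omega_limit M F x"
    unfolding omega_limit_def
  proof (rule INT_I)
    fix n :: nat assume "n \<in> {1..}"
    have "l \<in> closure {(F ^^ k) x | k. k \<ge> n}"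
      unfolding closure_sequential
    proof (rule exI[where x="\<lambda>i. (s \<circ> r) (i + n)"], intro conjI allI)
      fix i
      have "i + n \<le> r (i + n)" by (rule seq_suble[OF r])
      then have "n \<le> Suc (r (i + n))" by linarith
      moreover have "(\<lambda>i. (s \<circ> r) (i + n)) i = (F ^^ Suc (r (i + n))) x" unfolding s_def by simp
      ultimately show "(\<lambda>i. (s \<circ> r) (i + n)) i \<in> {(F ^^ k) x | k. k \<ge> n}"
        by blast
    next
      show "(\<lambda>i. (s \<circ> r) (i + n)) \<longlonglongrightarrow> l" by (rule LIMSEQ_ignore_initial_segment[OF lim])
    qed
    moreover have "l \<in> M" using l KM by blast
    ultimately show "l \<in> M \<inter> closure {(F ^^ k) x | k. k \<ge> n}" by blast
  qed
  then have "l \<in> Ob" using glob[OF x] M0O by blast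
  then show False using l by blast
qed

lemma uniform_attraction:
  fixes M :: "'a::euclidean_space set"
  assumes Mc: "closed M" and Fc: "continuous_on M F" and FM: "F ` M \<subseteq> M" and Fb: "bounded (F ` M)"
    and attr: "is_attractor M F M0"
    and glob: "\<And>x. x \<in> M \<Longrightarrow> omega_limit M F x \<subseteq> M0"
    and V: "openin (top_of_set M) V" and M0V: "M0 \<subseteq> V"
  shows "\<exists>N. \<forall>n\<ge>N. \<forall>x\<in>M. (F ^^ n) x \<in> V"
proof -
  obtain U where U: "openin (top_of_set M) U" "M0 \<subseteq> U"
    and hat: "\<forall>V. openin (top_of_set M) V \<and> M0 \<subseteq> V \<longrightarrow> (\<exists>N. \<forall>n\<ge>N. (F ^^ n) ` U \<subseteq> V)"
    using attr unfolding is_attractor_def by (elim conjE exE) (intro that, assumption+)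
  obtain Ob where Ob: "open Ob" "U = M \<inter> Ob" using U(1) unfolding openin_open by blast
  obtain n0 where n0: "\<And>n. n \<ge> n0 \<Longrightarrow> (F ^^ n) ` U \<subseteq> V" using hat V M0V by blast
  define K where "K = closure (F ` M)"
  have cK: "compact K" unfolding K_def compact_eq_bounded_closed using Fb by (simp add: bounded_closure)
  have KM: "K \<subseteq> M" unfolding K_def by (rule closure_minimal[OF FM Mc])
  have "\<forall>y\<in>K. \<exists>q. open (snd q) \<and> y \<in> snd q \<and> (\<forall>z\<in>snd q \<inter> M. (F ^^ fst q) z \<in> Ob)"
  proof
    fix y assume y: "y \<in> K"
    have M0O: "M0 \<subseteq> Ob" using U Ob by blast
    obtain m where m: "(F ^^ m) y \<in> Ob" using orbit_enters[OF Mc FM Fb Ob(1) M0O glob] y KM by blast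
    have "continuous_on M (F ^^ m)" by (rule funpow_cont[OF Fc FM])
    then obtain W where W: "open W" "W \<inter> M = (F ^^ m) -` Ob \<inter> M"
      using Ob(1) unfolding continuous_on_open_invariant by blast
    have "y \<in> W" using W(2) y KM m by blast
    then have "open (snd (m, W)) \<and> y \<in> snd (m, W) \<and> (\<forall>z\<in>snd (m, W) \<inter> M. (F ^^ fst (m, W)) z \<in> Ob)"
      using W by auto
    then show "\<exists>q. open (snd q) \<and> y \<in> snd q \<and> (\<forall>z\<in>snd q \<inter> M. (F ^^ fst q) z \<in> Ob)"
      by (rule exI)
  qed
  then obtain f where f: "\<forall>y\<in>K. open (snd (f y)) \<and> y \<in> snd (f y) \<and> (\<forall>z\<in>snd (f y) \<inter> M. (F ^^ fst (f y)) z \<in> Ob)"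
    by (rule bchoice[THEN exE])
  define mf where "mf y = fst (f y)" for y
  define Wf where "Wf y = snd (f y)" for y
  have mW: "\<And>y. y \<in> K \<Longrightarrow> open (Wf y) \<and> y \<in> Wf y \<and> (\<forall>z\<in>Wf y \<inter> M. (F ^^ mf y) z \<in> Ob)"
    unfolding mf_def Wf_def using f by blast
  have cov: "K \<subseteq> \<Union> (Wf ` K)" using mW by blast
  obtain T where T: "T \<subseteq> K" "finite T" "K \<subseteq> \<Union> (Wf ` T)"
    apply (rule compactE_image[OF cK _ cov])
    using mW apply blast
    by blast
  define N where "N = Suc (n0 + Max (insert 0 (mf ` T)))"
  have "\<forall>n\<ge>N. \<forall>x\<in>M. (F ^^ n) x \<in> V"
  proof (intro allI impI ballI)
    fix n x assume n: "n \<ge> N" and x: "x \<in> M"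
    have Fx: "F x \<in> K" unfolding K_def by (rule subsetD[OF closure_subset], rule imageI[OF x])
    then obtain t where t: "t \<in> T" "F x \<in> Wf t" using T by blast
    have tK: "t \<in> K" using t T by blast
    have FxM: "F x \<in> M" using x FM by blast
    have inO: "(F ^^ mf t) (F x) \<in> Ob" using mW[OF tK] t FxM by blast
    have inM: "(F ^^ mf t) (F x) \<in> M" by (rule funpow_in[OF FM FxM])
    have inU: "(F ^^ mf t) (F x) \<in> U" using inO inM Ob by blast
    have le: "mf t \<le> Max (insert 0 (mf ` T))" using T(2) t by auto
    define d where "d = n - Suc (mf t)"
    have dn0: "d \<ge> n0" unfolding d_def using n le N_def by linarith
    have "n = d + mf t + 1" unfolding d_def using n le N_def by linarith
    then have "(F ^^ n) x = (F ^^ d) ((F ^^ mf t) (F x))"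
      by (simp add: funpow_add funpow_swap1)
    also have "\<dots> \<in> V" using n0[OF dn0] inU by blast
    finally show "(F ^^ n) x \<in> V" .
  qed
  then show ?thesis by blast
qed


lemma shadow:
  fixes M :: "'a::euclidean_space set"
  assumes Mc: "closed M" and Fc: "continuous_on M F" and FM: "F ` M \<subseteq> M" and Fb: "bounded (F ` M)"
  shows "\<forall>\<eta>>0. \<exists>\<delta>>0. \<forall>y. (\<forall>j\<le>k. y j \<in> M) \<longrightarrow> (\<forall>j<k. dist (y (Suc j)) (F (y j)) < \<delta>)
            \<longrightarrow> dist (y k) ((F ^^ k) (y 0)) < \<eta>"
proof -
  obtain B where B: "\<forall>z\<in>F ` M. norm z \<le> B" using Fb unfolding bounded_iff by blast
  define L where "L = M \<inter> cball 0 (B + 1)"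
  have cL: "compact L" unfolding L_def by (rule closed_Int_compact[OF Mc compact_cball])
  have "continuous_on L F" by (rule continuous_on_subset[OF Fc]) (auto simp: L_def)
  then have uc: "uniformly_continuous_on L F" using cL by (rule compact_uniformly_continuous)
  show ?thesis
  proof (induction k)
    case 0
    show ?case
    proof (intro allI impI)
      fix \<eta> :: real assume "\<eta> > 0"
      then show "\<exists>\<delta>>0. \<forall>y. (\<forall>j\<le>0. y j \<in> M) \<longrightarrow> (\<forall>j<0. dist (y (Suc j)) (F (y j)) < \<delta>)
            \<longrightarrow> dist (y 0) ((F ^^ 0) (y 0)) < \<eta>"
        by (intro exI[of _ 1]) simp
    qed
  next
    case (Suc k)
    show ?case
    proof (intro allI impI)
      fix \<eta> :: real assume eta: "\<eta> > 0"
      then have "\<eta> / 2 > 0" by simp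
      then obtain e where e: "e > 0" and he: "\<forall>a\<in>L. \<forall>b\<in>L. dist b a < e \<longrightarrow> dist (F b) (F a) < \<eta> / 2"
        using uc unfolding uniformly_continuous_on_def by blast
      have "min e 1 > 0" using e by simp
      then obtain \<delta>1 where d1: "\<delta>1 > 0" and hd1: "\<forall>y. (\<forall>j\<le>k. y j \<in> M) \<longrightarrow> (\<forall>j<k. dist (y (Suc j)) (F (y j)) < \<delta>1)
            \<longrightarrow> dist (y k) ((F ^^ k) (y 0)) < min e 1"
        using Suc.IH by blast
      show "\<exists>\<delta>>0. \<forall>y. (\<forall>j\<le>Suc k. y j \<in> M) \<longrightarrow> (\<forall>j<Suc k. dist (y (Suc j)) (F (y j)) < \<delta>)
            \<longrightarrow> dist (y (Suc k)) ((F ^^ Suc k) (y 0)) < \<eta>"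
      proof (intro exI[of _ "min \<delta>1 (\<eta>/2)"] conjI allI impI)
        show "min \<delta>1 (\<eta>/2) > 0" using d1 eta by simp
        fix y assume hm: "\<forall>j\<le>Suc k. y j \<in> M" and hd: "\<forall>j<Suc k. dist (y (Suc j)) (F (y j)) < min \<delta>1 (\<eta>/2)"
        have dk: "dist (y k) ((F ^^ k) (y 0)) < min e 1"
          using hd1 hm hd by auto
        have d2: "dist (y (Suc k)) (F (y k)) < \<eta>/2" using hd by auto
        have d3: "dist (F (y k)) (F ((F ^^ k) (y 0))) < \<eta>/2"
        proof (cases k)
          case 0
          then show ?thesis using eta by simp
        next
          case (Suc k')
          have y0: "y 0 \<in> M" using hm by auto
          have "(F ^^ k) (y 0) = F ((F ^^ k') (y 0))" using Suc by simp
          moreover have "(F ^^ k') (y 0) \<in> M" by (rule funpow_in[OF FM y0])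
          ultimately have Fk: "(F ^^ k) (y 0) \<in> F ` M" by simp
          then have n1: "norm ((F ^^ k) (y 0)) \<le> B" using B by blast
          have FkM: "(F ^^ k) (y 0) \<in> M" using Fk FM by blast
          have "norm (y k) \<le> norm ((F ^^ k) (y 0)) + dist (y k) ((F ^^ k) (y 0))"
            by (metis dist_norm norm_triangle_sub add.commute)
          then have "norm (y k) \<le> B + 1" using n1 dk by linarith
          moreover have "y k \<in> M" using hm by auto
          ultimately have ykL: "y k \<in> L" unfolding L_def by simp
          have FkL: "(F ^^ k) (y 0) \<in> L" unfolding L_def using n1 FkM by simp
          show ?thesis using he ykL FkL dk by (simp add: dist_commute)
        qed
        have "dist (y (Suc k)) ((F ^^ Suc k) (y 0)) \<le> dist (y (Suc k)) (F (y k)) + dist (F (y k)) (F ((F ^^ k) (y 0)))"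
          by (simp add: dist_triangle)
        then show "dist (y (Suc k)) ((F ^^ Suc k) (y 0)) < \<eta>" using d2 d3 by linarith
      qed
    qed
  qed
qed

lemma pseudo_orbit:
  fixes M :: "'a::euclidean_space set"
  assumes Mc: "closed M" and Fc: "continuous_on M F" and FM: "F ` M \<subseteq> M" and Fb: "bounded (F ` M)"
    and attr: "is_attractor M F M0"
    and glob: "\<And>x. x \<in> M \<Longrightarrow> omega_limit M F x \<subseteq> M0"
    and r: "r > 0"
  shows "\<exists>\<delta>>0. \<exists>k. \<forall>y. (\<forall>j\<le>k. y j \<in> M) \<longrightarrow> (\<forall>j<k. dist (y (Suc j)) (F (y j)) < \<delta>)
            \<longrightarrow> infdist (y k) M0 < r"
proof -
  define V where "V = M \<inter> {x. infdist x M0 < r/2}"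
  have "open {x. infdist x M0 < r/2}"
    by (rule open_Collect_less) (intro continuous_on_infdist continuous_on_id continuous_on_const)+
  then have openV: "openin (top_of_set M) V" unfolding V_def by (rule openin_open_Int)
  have M0M: "M0 \<subseteq> M" using attr unfolding is_attractor_def by blast
  have "M0 \<subseteq> V" unfolding V_def using M0M r by (auto simp: infdist_zero)
  then obtain N where N: "\<forall>n\<ge>N. \<forall>x\<in>M. (F ^^ n) x \<in> V"
    using uniform_attraction[OF Mc Fc FM Fb attr glob openV] by blast
  have "r/2 > 0" using r by simp
  then obtain \<delta> where d: "\<delta> > 0" and hd: "\<forall>y. (\<forall>j\<le>N. y j \<in> M) \<longrightarrow> (\<forall>j<N. dist (y (Suc j)) (F (y j)) < \<delta>)
            \<longrightarrow> dist (y N) ((F ^^ N) (y 0)) < r/2"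
    using shadow[OF Mc Fc FM Fb, of N] by blast
  show ?thesis
  proof (intro exI[of _ \<delta>] conjI exI[of _ N] allI impI)
    show "\<delta> > 0" by (rule d)
    fix y assume hm: "\<forall>j\<le>N. y j \<in> M" and hc: "\<forall>j<N. dist (y (Suc j)) (F (y j)) < \<delta>"
    have "y 0 \<in> M" using hm by auto
    then have "(F ^^ N) (y 0) \<in> V" using N by blast
    then have a: "infdist ((F ^^ N) (y 0)) M0 < r/2" unfolding V_def by blast
    have b: "dist (y N) ((F ^^ N) (y 0)) < r/2" using hd hm hc by blast
    have "infdist (y N) M0 \<le> infdist ((F ^^ N) (y 0)) M0 + dist (y N) ((F ^^ N) (y 0))"
      by (rule infdist_triangle)
    then show "infdist (y N) M0 < r" using a b by linarith
  qed
qed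

lemma M0_nonempty:
  fixes M :: "'a::euclidean_space set"
  assumes Mc: "closed M" and FM: "F ` M \<subseteq> M" and Fb: "bounded (F ` M)"
    and attr: "is_attractor M F M0"
    and glob: "\<And>x. x \<in> M \<Longrightarrow> omega_limit M F x \<subseteq> M0"
    and ne: "M \<noteq> {}"
  shows "M0 \<noteq> {}"
proof
  assume e: "M0 = {}"
  obtain U where U: "openin (top_of_set M) U" "M0 \<subseteq> U"
    and hat: "\<forall>V. openin (top_of_set M) V \<and> M0 \<subseteq> V \<longrightarrow> (\<exists>N. \<forall>n\<ge>N. (F ^^ n) ` U \<subseteq> V)"
    using attr unfolding is_attractor_def by (elim conjE exE) (intro that, assumption+)
  obtain Ob where Ob: "open Ob" "U = M \<inter> Ob" using U(1) unfolding openin_open by blast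
  have "openin (top_of_set M) {}" by simp
  then obtain N where N: "\<forall>n\<ge>N. (F ^^ n) ` U \<subseteq> {}" using hat e by blast
  obtain x where x: "x \<in> M" using ne by blast
  have "M0 \<subseteq> Ob" using e by simp
  then obtain m where m: "(F ^^ m) x \<in> Ob" using orbit_enters[OF Mc FM Fb Ob(1) _ glob x] by blast
  have "(F ^^ m) x \<in> M" by (rule funpow_in[OF FM x])
  then have "(F ^^ m) x \<in> U" using m Ob by blast
  then have "(F ^^ N) ((F ^^ m) x) \<in> (F ^^ N) ` U" by (rule imageI)
  then show False using N by blast
qed


lemma space_of_borel: "sets \<nu> = sets borel \<Longrightarrow> space \<nu> = UNIV"
  using sets_eq_imp_space_eq by fastforce

lemma set_int_cont:
  fixes M :: "'a::euclidean_space set" and g :: "'a \<Rightarrow> real"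
  assumes P: "prob_space \<nu>" and S: "sets \<nu> = sets borel" and Mc: "closed M"
    and g: "continuous_on M g" and bd: "\<And>x. x \<in> M \<Longrightarrow> \<bar>g x\<bar> \<le> C"
  shows "integrable \<nu> (\<lambda>x. indicator M x * g x)"
proof -
  interpret prob_space \<nu> by (rule P)
  have "(\<lambda>x. indicator M x *\<^sub>R g x) \<in> borel_measurable borel"
    by (rule borel_measurable_continuous_on_indicator) (use Mc g in auto)
  then have m: "(\<lambda>x. indicator M x * g x) \<in> borel_measurable \<nu>"
    by (subst measurable_cong_sets[OF S refl]) simp
  have "AE x in \<nu>. norm (indicator M x * g x) \<le> max C 0"
  proof (intro AE_I2)
    fix x show "norm (indicator M x * g x) \<le> max C 0"
      using bd[of x] by (cases "x \<in> M") (auto simp: indicator_def max_def)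
  qed
  then show ?thesis using m by (rule integrable_const_bound)
qed

lemma int_le_measure:
  fixes M :: "'a::euclidean_space set" and g :: "'a \<Rightarrow> real"
  assumes P: "prob_space \<nu>" and S: "sets \<nu> = sets borel"
    and g01: "\<And>x. x \<in> M \<Longrightarrow> 0 \<le> g x \<and> g x \<le> 1"
    and gE: "\<And>x. x \<in> M \<Longrightarrow> 0 < g x \<Longrightarrow> x \<in> E" and E: "E \<in> sets borel"
  shows "(LINT x:M|\<nu>. g x) \<le> measure \<nu> E"
proof -
  interpret prob_space \<nu> by (rule P)
  have sp: "space \<nu> = UNIV" by (rule space_of_borel[OF S])
  have Es: "E \<in> sets \<nu>" using E S by simp
  have "integrable \<nu> (indicator E :: 'a \<Rightarrow> real)"
    by (rule integrable_real_indicator[OF Es]) (simp add: less_top[symmetric])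
  then have "integral\<^sup>L \<nu> (\<lambda>x. indicator M x * g x) \<le> integral\<^sup>L \<nu> (indicator E)"
  proof (rule integral_mono')
    fix x
    show "indicator M x * g x \<le> (indicator E x :: real)"
      using g01[of x] gE[of x] by (cases "x \<in> M"; cases "g x > 0") (auto simp: indicator_def)
    show "0 \<le> (indicator E x :: real)" by simp
  qed
  then show ?thesis unfolding set_lebesgue_integral_def using sp by simp
qed

lemma measure_le_int:
  fixes M :: "'a::euclidean_space set" and g :: "'a \<Rightarrow> real"
  assumes P: "prob_space \<nu>" and S: "sets \<nu> = sets borel" and Mc: "closed M"
    and g: "continuous_on M g"
    and g01: "\<And>x. x \<in> M \<Longrightarrow> 0 \<le> g x \<and> g x \<le> 1"
    and gE: "\<And>x. x \<in> E \<Longrightarrow> g x = 1" and EM: "E \<subseteq> M"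
  shows "measure \<nu> E \<le> (LINT x:M|\<nu>. g x)"
proof -
  interpret prob_space \<nu> by (rule P)
  have sp: "space \<nu> = UNIV" by (rule space_of_borel[OF S])
  have "integrable \<nu> (\<lambda>x. indicator M x * g x)"
    by (rule set_int_cont[OF P S Mc g, of 1]) (use g01 in auto)
  then have "integral\<^sup>L \<nu> (indicator E) \<le> integral\<^sup>L \<nu> (\<lambda>x. indicator M x * g x)"
  proof (rule integral_mono')
    fix x
    show "(indicator E x :: real) \<le> indicator M x * g x"
      using g01[of x] gE[of x] EM by (cases "x \<in> E") (auto simp: indicator_def)
    show "0 \<le> indicator M x * g x"
      using g01[of x] by (auto simp: indicator_def)
  qed
  then show ?thesis unfolding set_lebesgue_integral_def using sp by simp
qed


locale qsd_setting =
  fixes M M0 M1 :: "'a::euclidean_space set"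
    and F :: "'a \<Rightarrow> 'a"
    and p :: "real \<Rightarrow> 'a \<Rightarrow> 'a measure"
    and eps :: "nat \<Rightarrow> real" and lam :: "nat \<Rightarrow> real"
    and \<mu>s :: "nat \<Rightarrow> 'a measure" and \<mu> :: "'a measure"
  assumes M_closed: "closed M"
    and F_cont: "continuous_on M F" and F_into: "F ` M \<subseteq> M" and F_bdd: "bounded (F ` M)"
    and kernels: "markov_kernels_on M p"
    and SH1: "\<And>\<delta>. \<delta> > 0 \<Longrightarrow>
       ((\<lambda>\<epsilon>. SUP x\<in>M. measure (p \<epsilon> x) (M - nbhd M \<delta> {F x})) \<longlongrightarrow> 0) (at_right 0)"
    and M0_sub: "M0 \<subseteq> M"
    and M1_def: "M1 = M - M0"
    and F_M0: "F ` M0 \<subseteq> M0" and F_M1: "F ` M1 \<subseteq> M1"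
    and absorb: "\<And>\<epsilon> x. \<epsilon> > 0 \<Longrightarrow> x \<in> M0 \<Longrightarrow> measure (p \<epsilon> x) M1 = 0"
    and M0_compact: "compact M0"
    and M0_attr: "is_attractor M F M0"
    and M0_global: "\<And>x. x \<in> M \<Longrightarrow> omega_limit M F x \<subseteq> M0"
    and eps_pos: "\<And>n. eps n > 0" and eps_lim: "eps \<longlonglongrightarrow> 0"
    and QSD: "\<And>n. is_QSD M1 (p (eps n)) (\<mu>s n) (lam n)"
    and mu_prob: "borel_prob_on M \<mu>"
    and weak: "weak_conv_on M \<mu>s \<mu>"
begin

lemma M0_closed': "closed M0" using M0_compact by (rule compact_imp_closed)
lemma MB: "M \<in> sets borel" using M_closed by simp
lemma M0B: "M0 \<in> sets borel" using M0_closed' by simp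
lemma M1B: "M1 \<in> sets borel" unfolding M1_def using MB M0B by simp
lemma M1M: "M1 \<subseteq> M" unfolding M1_def by blast

lemma mus: "prob_space (\<mu>s n)" "sets (\<mu>s n) = sets borel" "measure (\<mu>s n) M1 = 1"
  "0 < lam n" "lam n < 1"
  "\<And>\<Gamma>. \<Gamma> \<in> sets borel \<Longrightarrow> \<Gamma> \<subseteq> M1 \<Longrightarrow> (LINT x:M1|\<mu>s n. measure (p (eps n) x) \<Gamma>) = lam n * measure (\<mu>s n) \<Gamma>"
  using QSD[of n] unfolding is_QSD_def borel_prob_on_def by auto

lemma mu: "prob_space \<mu>" "sets \<mu> = sets borel" "measure \<mu> M = 1"
  using mu_prob unfolding borel_prob_on_def by auto

lemma ker: assumes "x \<in> M" shows "prob_space (p (eps n) x)" "sets (p (eps n) x) = sets borel"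
    "measure (p (eps n) x) M = 1"
  using kernels eps_pos[of n] assms unfolding markov_kernels_on_def borel_prob_on_def by auto

lemma ker_meas_le1: "x \<in> M \<Longrightarrow> measure (p (eps n) x) A \<le> 1"
  using prob_space.prob_le_1[OF ker(1)] by blast

lemma M_ne: "M \<noteq> {}"
proof
  assume "M = {}"
  then have "M1 = {}" using M1M by blast
  then show False using mus(3)[of 0] by simp
qed

lemma M0_ne: "M0 \<noteq> {}"
  by (rule M0_nonempty[OF M_closed F_into F_bdd M0_attr M0_global M_ne])

definition beta :: "real \<Rightarrow> nat \<Rightarrow> real" where
  "beta \<delta> n = (SUP x\<in>M. measure (p (eps n) x) (M - nbhd M \<delta> {F x}))"

lemma beta_upper: "x \<in> M \<Longrightarrow> measure (p (eps n) x) (M - nbhd M \<delta> {F x}) \<le> beta \<delta> n"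
  unfolding beta_def
  by (rule cSUP_upper) (auto intro!: bdd_aboveI2[where M=1] ker_meas_le1)

lemma beta_nonneg: "0 \<le> beta \<delta> n"
proof -
  obtain x where "x \<in> M" using M_ne by blast
  then show ?thesis using beta_upper[of x] measure_nonneg order_trans by metis
qed

lemma beta_lim: "\<delta> > 0 \<Longrightarrow> (\<lambda>n. beta \<delta> n) \<longlonglongrightarrow> 0"
proof -
  assume d: "\<delta> > 0"
  have "filterlim eps (at_right 0) sequentially"
    by (rule tendsto_imp_filterlim_at_right[OF eps_lim]) (simp add: eps_pos)
  from filterlim_compose[OF SH1[OF d] this] show ?thesis unfolding beta_def .
qed

lemma nbhd_eq: "nbhd M \<delta> {z} = {y \<in> M. dist y z < \<delta>}"
  unfolding nbhd_def by (simp add: dist_norm)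

definition pre :: "real \<Rightarrow> 'a set \<Rightarrow> 'a set" where
  "pre \<delta> \<Gamma> = {x \<in> M1. \<exists>y\<in>\<Gamma>. dist (F x) y < \<delta>}"

lemma pre_B: "pre \<delta> \<Gamma> \<in> sets borel" "pre \<delta> \<Gamma> \<subseteq> M1"
proof -
  define W where "W = (\<Union>y\<in>\<Gamma>. ball y \<delta>)"
  have "open W" unfolding W_def by blast
  then obtain A where A: "open A" "A \<inter> M = F -` W \<inter> M"
    using F_cont unfolding continuous_on_open_invariant by blast
  have key: "x \<in> A \<longleftrightarrow> (\<exists>y\<in>\<Gamma>. dist (F x) y < \<delta>)" if "x \<in> M" for x
  proof -
    have "x \<in> A \<longleftrightarrow> F x \<in> W" using A(2) that by blast
    then show ?thesis unfolding W_def by (auto simp: dist_commute)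
  qed
  have "pre \<delta> \<Gamma> = M1 \<inter> A"
    using key M1M unfolding pre_def by blast
  then show "pre \<delta> \<Gamma> \<in> sets borel" using M1B A(1) by simp
  show "pre \<delta> \<Gamma> \<subseteq> M1" unfolding pre_def by blast
qed

lemma one_step:
  assumes G: "\<Gamma> \<in> sets borel" "\<Gamma> \<subseteq> M1"
  shows "lam n * measure (\<mu>s n) \<Gamma> \<le> beta \<delta> n + measure (\<mu>s n) (pre \<delta> \<Gamma>)"
proof -
  interpret P: prob_space "\<mu>s n" by (rule mus(1))
  have sp: "space (\<mu>s n) = UNIV" by (rule space_of_borel[OF mus(2)])
  have s1: "M1 \<in> sets (\<mu>s n)" using M1B mus(2) by simp
  have s2: "pre \<delta> \<Gamma> \<in> sets (\<mu>s n)" using pre_B(1) mus(2) by simp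
  have i1: "integrable (\<mu>s n) (indicator M1 :: 'a \<Rightarrow> real)"
    by (rule integrable_real_indicator[OF s1]) (simp add: less_top[symmetric])
  have i2: "integrable (\<mu>s n) (indicator (pre \<delta> \<Gamma>) :: 'a \<Rightarrow> real)"
    by (rule integrable_real_indicator[OF s2]) (simp add: less_top[symmetric])
  have int: "integrable (\<mu>s n) (\<lambda>x. beta \<delta> n * indicator M1 x + indicator (pre \<delta> \<Gamma>) x)"
    using i1 i2 by simp
  have "lam n * measure (\<mu>s n) \<Gamma> = integral\<^sup>L (\<mu>s n) (\<lambda>x. indicator M1 x *\<^sub>R measure (p (eps n) x) \<Gamma>)"
    using mus(6)[OF G] unfolding set_lebesgue_integral_def by simp
  also have "\<dots> \<le> integral\<^sup>L (\<mu>s n) (\<lambda>x. beta \<delta> n * indicator M1 x + indicator (pre \<delta> \<Gamma>) x)"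
    using int
  proof (rule integral_mono')
    fix x
    show "0 \<le> beta \<delta> n * indicator M1 x + (indicator (pre \<delta> \<Gamma>) x :: real)"
      using beta_nonneg[of \<delta> n] by simp
    show "indicator M1 x *\<^sub>R measure (p (eps n) x) \<Gamma> \<le> beta \<delta> n * indicator M1 x + indicator (pre \<delta> \<Gamma>) x"
    proof (cases "x \<in> M1")
      case False then show ?thesis using beta_nonneg[of \<delta> n] by simp
    next
      case True
      then have xM: "x \<in> M" using M1M by blast
      show ?thesis
      proof (cases "x \<in> pre \<delta> \<Gamma>")
        case True
        then show ?thesis using \<open>x \<in> M1\<close> ker_meas_le1[OF xM, of n \<Gamma>] beta_nonneg[of \<delta> n] by simp
      next
        case False
        then have far: "\<forall>y\<in>\<Gamma>. dist (F x) y \<ge> \<delta>" using \<open>x \<in> M1\<close> unfolding pre_def by auto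
        have sub: "\<Gamma> \<subseteq> M - nbhd M \<delta> {F x}"
          using far G(2) M1M unfolding nbhd_eq by (auto simp: dist_commute)
        interpret K: prob_space "p (eps n) x" by (rule ker(1)[OF xM])
        have "M - nbhd M \<delta> {F x} \<in> sets (p (eps n) x)"
        proof -
          have "M - nbhd M \<delta> {F x} = M - ball (F x) \<delta>" unfolding nbhd_eq by (auto simp: dist_commute)
          then show ?thesis using ker(2)[OF xM] MB by simp
        qed
        then have "measure (p (eps n) x) \<Gamma> \<le> measure (p (eps n) x) (M - nbhd M \<delta> {F x})"
          using sub by (rule K.finite_measure_mono[rotated])
        also have "\<dots> \<le> beta \<delta> n" by (rule beta_upper[OF xM])
        finally show ?thesis using \<open>x \<in> M1\<close> False by simp
      qed
    qed
  qed
  also have "\<dots> = beta \<delta> n * measure (\<mu>s n) M1 + measure (\<mu>s n) (pre \<delta> \<Gamma>)"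
    using i1 i2 sp by simp
  also have "\<dots> = beta \<delta> n + measure (\<mu>s n) (pre \<delta> \<Gamma>)" using mus(3) by simp
  finally show ?thesis .
qed

end


context qsd_setting begin

definition iterA :: "real \<Rightarrow> 'a set \<Rightarrow> nat \<Rightarrow> 'a set" where
  "iterA \<delta> B0 j = ((pre \<delta>) ^^ j) B0"

lemma iterA_Suc: "iterA \<delta> B0 (Suc j) = pre \<delta> (iterA \<delta> B0 j)"
  unfolding iterA_def by simp

lemma iterA_B: assumes "B0 \<in> sets borel" "B0 \<subseteq> M1"
  shows "iterA \<delta> B0 j \<in> sets borel \<and> iterA \<delta> B0 j \<subseteq> M1"
proof (cases j)
  case 0 then show ?thesis using assms unfolding iterA_def by simp
next
  case (Suc j') then show ?thesis by (simp add: iterA_Suc pre_B)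
qed

lemma iter_ineq: assumes B: "B0 \<in> sets borel" "B0 \<subseteq> M1"
  shows "lam n ^ j * measure (\<mu>s n) B0 \<le> real j * beta \<delta> n + measure (\<mu>s n) (iterA \<delta> B0 j)"
proof (induction j)
  case 0 then show ?case unfolding iterA_def by simp
next
  case (Suc j)
  define a where "a = lam n ^ j * measure (\<mu>s n) B0"
  define b where "b = measure (\<mu>s n) (iterA \<delta> B0 j)"
  define be where "be = beta \<delta> n"
  have IH: "a \<le> real j * be + b" using Suc.IH unfolding a_def b_def be_def .
  have l0: "0 \<le> lam n" using mus(4)[of n] by simp
  have l1: "lam n \<le> 1" using mus(5)[of n] by simp
  have be0: "0 \<le> be" unfolding be_def by (rule beta_nonneg)
  have os: "lam n * b \<le> be + measure (\<mu>s n) (iterA \<delta> B0 (Suc j))"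
    unfolding b_def be_def iterA_Suc using one_step iterA_B[OF B] by blast
  have "lam n ^ Suc j * measure (\<mu>s n) B0 = lam n * a" unfolding a_def by simp
  also have "\<dots> \<le> lam n * (real j * be + b)" by (rule mult_left_mono[OF IH l0])
  also have "\<dots> = lam n * (real j * be) + lam n * b" by (simp add: algebra_simps)
  also have "\<dots> \<le> real j * be + lam n * b"
  proof -
    have "0 \<le> real j * be" using be0 by simp
    then have "lam n * (real j * be) \<le> 1 * (real j * be)" by (rule mult_right_mono[OF l1])
    then show ?thesis by simp
  qed
  also have "\<dots> \<le> real (Suc j) * be + measure (\<mu>s n) (iterA \<delta> B0 (Suc j))"
    using os by (simp add: algebra_simps)
  finally show ?case unfolding be_def .
qed

lemma chain:
  assumes "x \<in> iterA \<delta> B0 j" "B0 \<subseteq> M1"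
  shows "\<exists>y. y 0 = x \<and> (\<forall>i\<le>j. y i \<in> M) \<and> (\<forall>i<j. dist (y (Suc i)) (F (y i)) < \<delta>) \<and> y j \<in> B0"
  using assms(1)
proof (induction j arbitrary: x)
  case 0
  then have "x \<in> M" using assms(2) M1M unfolding iterA_def by auto
  then show ?case using 0 unfolding iterA_def by (intro exI[of _ "\<lambda>_. x"]) auto
next
  case (Suc j)
  then have xM1: "x \<in> M1" and "\<exists>z\<in>iterA \<delta> B0 j. dist (F x) z < \<delta>"
    unfolding iterA_Suc pre_def by auto
  then obtain z where z: "z \<in> iterA \<delta> B0 j" "dist (F x) z < \<delta>" by blast
  obtain y' where y': "y' 0 = z" "\<forall>i\<le>j. y' i \<in> M" "\<forall>i<j. dist (y' (Suc i)) (F (y' i)) < \<delta>" "y' j \<in> B0"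
    using Suc.IH[OF z(1)] by blast
  define y where "y i = (case i of 0 \<Rightarrow> x | Suc i' \<Rightarrow> y' i')" for i
  have xM: "x \<in> M" using xM1 M1M by blast
  have a: "\<forall>i\<le>Suc j. y i \<in> M"
  proof (intro allI impI)
    fix i assume "i \<le> Suc j" then show "y i \<in> M" using xM y'(2) by (cases i) (auto simp: y_def)
  qed
  have b: "\<forall>i<Suc j. dist (y (Suc i)) (F (y i)) < \<delta>"
  proof (intro allI impI)
    fix i assume "i < Suc j" then show "dist (y (Suc i)) (F (y i)) < \<delta>"
      using z(2) y'(1,3) by (cases i) (auto simp: y_def dist_commute)
  qed
  show ?case using a b y'(4) by (intro exI[of _ y]) (auto simp: y_def)
qed

definition Bset :: "real \<Rightarrow> 'a set" where
  "Bset r = {x \<in> M1. r \<le> infdist x M0}"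

lemma Bset_B: "Bset r \<in> sets borel" "Bset r \<subseteq> M1"
proof -
  have "closed {x. r \<le> infdist x M0}"
    by (rule closed_Collect_le) (intro continuous_on_infdist continuous_on_id continuous_on_const)+
  then have "M1 \<inter> {x. r \<le> infdist x M0} \<in> sets borel" using M1B by simp
  moreover have "Bset r = M1 \<inter> {x. r \<le> infdist x M0}" unfolding Bset_def by blast
  ultimately show "Bset r \<in> sets borel" by simp
  show "Bset r \<subseteq> M1" unfolding Bset_def by blast
qed

lemma iter_empty:
  assumes r: "r > 0"
  obtains \<delta> k where "\<delta> > 0" "iterA \<delta> (Bset r) k = {}"
proof -
  obtain \<delta> k where d: "\<delta> > 0" and hk: "\<forall>y. (\<forall>j\<le>k. y j \<in> M) \<longrightarrow> (\<forall>j<k. dist (y (Suc j)) (F (y j)) < \<delta>)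
            \<longrightarrow> infdist (y k) M0 < r"
    using pseudo_orbit[OF M_closed F_cont F_into F_bdd M0_attr M0_global r] by blast
  have "iterA \<delta> (Bset r) k = {}"
  proof (rule ccontr)
    assume "iterA \<delta> (Bset r) k \<noteq> {}"
    then obtain x where "x \<in> iterA \<delta> (Bset r) k" by blast
    from chain[OF this Bset_B(2)] obtain y where y: "\<forall>i\<le>k. y i \<in> M" "\<forall>i<k. dist (y (Suc i)) (F (y i)) < \<delta>" "y k \<in> Bset r"
      by blast
    have "infdist (y k) M0 < r" using hk y(1,2) by blast
    moreover have "r \<le> infdist (y k) M0" using y(3) unfolding Bset_def by blast
    ultimately show False by simp
  qed
  then show ?thesis using d that by blast
qed

lemma B_small:
  assumes r: "r > 0"
  obtains \<delta> k where "\<delta> > 0" "\<And>n. lam n ^ k * measure (\<mu>s n) (Bset r) \<le> real k * beta \<delta> n"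
proof -
  obtain \<delta> k where d: "\<delta> > 0" and e: "iterA \<delta> (Bset r) k = {}" using iter_empty[OF r] by blast
  have "lam n ^ k * measure (\<mu>s n) (Bset r) \<le> real k * beta \<delta> n" for n
    using iter_ineq[OF Bset_B(1)[of r] Bset_B(2)[of r], where n=n and j=k and \<delta>=\<delta>] e by simp
  then show ?thesis using d that by blast
qed

end


context qsd_setting begin

lemma null_cover:
  assumes P: "prob_space \<nu>" and S: "sets \<nu> = sets borel"
    and EB: "\<And>m. E m \<in> sets borel" and E0: "\<And>m::nat. measure \<nu> (E m) = 0"
    and SB: "T \<in> sets borel" and cov: "T \<subseteq> (\<Union>m. E m)"
  shows "measure \<nu> T = 0"
proof -
  interpret prob_space \<nu> by (rule P)
  have "E m \<in> null_sets \<nu>" for m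
    by (rule null_setsI) (use E0 EB S emeasure_eq_measure in auto)
  then have "(\<Union>m. E m) \<in> null_sets \<nu>" by (rule null_sets_UN)
  moreover have "T \<in> sets \<nu>" using SB S by simp
  ultimately have "T \<in> null_sets \<nu>" using cov by (rule null_sets_subset)
  then show ?thesis by (rule measure_eq_0_null_sets)
qed

definition Dset :: "real \<Rightarrow> 'a set" where
  "Dset t = {x \<in> M. t \<le> infdist (F x) M0}"

lemma Dset_B: "Dset t \<in> sets borel"
proof -
  have "closed {x \<in> M. (\<lambda>_. t) x \<le> (\<lambda>x. infdist (F x) M0) x}"
    by (rule continuous_on_closed_Collect_le)
      (auto intro: continuous_on_const continuous_on_infdist[OF F_cont] M_closed)
  then show ?thesis unfolding Dset_def by simp
qed

lemma Dset_M1: "t > 0 \<Longrightarrow> Dset t \<subseteq> M1"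
proof
  fix x assume t: "t > 0" and x: "x \<in> Dset t"
  then have xM: "x \<in> M" and le: "t \<le> infdist (F x) M0" unfolding Dset_def by auto
  have "x \<notin> M0"
  proof
    assume "x \<in> M0"
    then have "F x \<in> M0" using F_M0 by blast
    then have "infdist (F x) M0 = 0" by (rule infdist_zero)
    then show False using le t by simp
  qed
  then show "x \<in> M1" using xM M1_def by blast
qed

lemma infdist_pos: "z \<notin> M0 \<Longrightarrow> 0 < infdist z M0"
  using in_closed_iff_infdist_zero[OF M0_closed' M0_ne, of z] infdist_nonneg[of z M0] by linarith

lemma lam_ge:
  assumes d: "\<delta> > 0"
  shows "(1 - beta \<delta> n) * measure (\<mu>s n) (Dset \<delta>) \<le> lam n"
proof -
  interpret P: prob_space "\<mu>s n" by (rule mus(1))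
  have sp: "space (\<mu>s n) = UNIV" by (rule space_of_borel[OF mus(2)])
  define f where "f x = indicator M1 x *\<^sub>R measure (p (eps n) x) M1" for x
  have eq: "integral\<^sup>L (\<mu>s n) f = lam n"
    using mus(6)[OF M1B subset_refl, of n] mus(3)[of n] unfolding f_def set_lebesgue_integral_def by simp
  have intf: "integrable (\<mu>s n) f"
  proof (rule ccontr)
    assume "\<not> integrable (\<mu>s n) f"
    then have "integral\<^sup>L (\<mu>s n) f = 0" by (rule not_integrable_integral_eq)
    then show False using eq mus(4)[of n] by simp
  qed
  have sD: "Dset \<delta> \<in> sets (\<mu>s n)" using Dset_B mus(2) by simp
  have iD: "integrable (\<mu>s n) (indicator (Dset \<delta>) :: 'a \<Rightarrow> real)"
    by (rule integrable_real_indicator[OF sD]) (simp add: less_top[symmetric])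
  then have ig: "integrable (\<mu>s n) (\<lambda>x. (1 - beta \<delta> n) * indicator (Dset \<delta>) x)" by simp
  have "integral\<^sup>L (\<mu>s n) (\<lambda>x. (1 - beta \<delta> n) * indicator (Dset \<delta>) x) \<le> integral\<^sup>L (\<mu>s n) f"
  proof (rule integral_mono[OF ig intf])
    fix x
    show "(1 - beta \<delta> n) * indicator (Dset \<delta>) x \<le> f x"
    proof (cases "x \<in> Dset \<delta>")
      case False
      then show ?thesis unfolding f_def by (simp add: indicator_def)
    next
      case True
      then have xM1: "x \<in> M1" using Dset_M1[OF d] by blast
      then have xM: "x \<in> M" using M1M by blast
      have le: "\<delta> \<le> infdist (F x) M0" using True unfolding Dset_def by blast
      interpret K: prob_space "p (eps n) x" by (rule ker(1)[OF xM])
      have sM: "M \<in> sets (p (eps n) x)" using ker(2)[OF xM] MB by simp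
      have sM0: "M0 \<in> sets (p (eps n) x)" using ker(2)[OF xM] M0B by simp
      have "measure (p (eps n) x) M1 = measure (p (eps n) x) M - measure (p (eps n) x) M0"
        unfolding M1_def by (rule K.finite_measure_Diff[OF sM sM0 M0_sub])
      also have "\<dots> = 1 - measure (p (eps n) x) M0" using ker(3)[OF xM] by simp
      finally have e1: "measure (p (eps n) x) M1 = 1 - measure (p (eps n) x) M0" .
      have sub: "M0 \<subseteq> M - nbhd M \<delta> {F x}"
      proof
        fix y assume y: "y \<in> M0"
        have "infdist (F x) M0 \<le> dist (F x) y" by (rule infdist_le[OF y])
        then have "\<not> dist y (F x) < \<delta>" using le by (simp add: dist_commute)
        then show "y \<in> M - nbhd M \<delta> {F x}" using y M0_sub unfolding nbhd_eq by blast
      qed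
      have "M - nbhd M \<delta> {F x} \<in> sets (p (eps n) x)"
      proof -
        have "M - nbhd M \<delta> {F x} = M - ball (F x) \<delta>" unfolding nbhd_eq by (auto simp: dist_commute)
        then show ?thesis using ker(2)[OF xM] MB by simp
      qed
      then have "measure (p (eps n) x) M0 \<le> measure (p (eps n) x) (M - nbhd M \<delta> {F x})"
        using sub by (rule K.finite_measure_mono[rotated])
      also have "\<dots> \<le> beta \<delta> n" by (rule beta_upper[OF xM])
      finally have "1 - beta \<delta> n \<le> measure (p (eps n) x) M1" using e1 by simp
      then show ?thesis using True xM1 unfolding f_def by simp
    qed
  qed
  also have "\<dots> = lam n" by (rule eq)
  finally show ?thesis using sp by simp
qed

lemma lam_lower:
  assumes ne: "measure \<mu> M1 \<noteq> 0"
  shows "\<exists>c>0. \<exists>N0. \<forall>n\<ge>N0. c \<le> lam n"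
proof -
  have cover: "M1 \<subseteq> (\<Union>m. Dset (inverse (real (Suc m))))"
  proof
    fix x assume x: "x \<in> M1"
    then have "F x \<in> M1" using F_M1 by blast
    then have "F x \<notin> M0" unfolding M1_def by blast
    then have "0 < infdist (F x) M0" by (rule infdist_pos)
    then obtain m where "inverse (real (Suc m)) < infdist (F x) M0" using reals_Archimedean by blast
    then have "x \<in> Dset (inverse (real (Suc m)))" using x M1M unfolding Dset_def by auto
    then show "x \<in> (\<Union>m. Dset (inverse (real (Suc m))))" by blast
  qed
  obtain m where m: "measure \<mu> (Dset (inverse (real (Suc m)))) \<noteq> 0"
  proof (rule ccontr)
    assume "\<not> thesis"
    then have "\<And>m. measure \<mu> (Dset (inverse (real (Suc m)))) = 0" using that by blast
    then have "measure \<mu> M1 = 0" using null_cover[OF mu(1) mu(2) Dset_B _ M1B cover] by blast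
    then show False using ne by simp
  qed
  define \<delta> where "\<delta> = inverse (real (Suc m)) / 2"
  have d: "\<delta> > 0" unfolding \<delta>_def by simp
  have d2: "2 * \<delta> = inverse (real (Suc m))" unfolding \<delta>_def by simp
  define c0 where "c0 = measure \<mu> (Dset (2 * \<delta>))"
  have c0: "c0 > 0" unfolding c0_def d2 using m measure_nonneg[of \<mu>] by (simp add: order_less_le)
  define \<phi> where "\<phi> x = max 0 (min 1 (infdist (F x) M0 / \<delta> - 1))" for x
  have phc: "continuous_on M \<phi>" unfolding \<phi>_def
    by (intro continuous_intros continuous_on_infdist[OF F_cont]) (use d in auto)
  have ph01: "\<And>x. x \<in> M \<Longrightarrow> 0 \<le> \<phi> x \<and> \<phi> x \<le> 1" unfolding \<phi>_def by auto
  have "c0 \<le> (LINT x:M|\<mu>. \<phi> x)" unfolding c0_def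
  proof (rule measure_le_int[OF mu(1) mu(2) M_closed phc ph01])
    fix x assume "x \<in> Dset (2 * \<delta>)"
    then have "2 * \<delta> \<le> infdist (F x) M0" unfolding Dset_def by blast
    then have "2 \<le> infdist (F x) M0 / \<delta>" using d by (simp add: pos_le_divide_eq)
    then show "\<phi> x = 1" unfolding \<phi>_def by simp
  next
    show "Dset (2 * \<delta>) \<subseteq> M" unfolding Dset_def by blast
  qed
  have "bounded (\<phi> ` M)" unfolding bounded_iff using ph01 by (intro exI[of _ 1]) auto
  then have lim: "(\<lambda>n. LINT x:M|\<mu>s n. \<phi> x) \<longlonglongrightarrow> (LINT x:M|\<mu>. \<phi> x)"
    using weak phc unfolding weak_conv_on_def by blast
  have "c0 / 2 < (LINT x:M|\<mu>. \<phi> x)" using \<open>c0 \<le> _\<close> c0 by simp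
  then have ev1: "eventually (\<lambda>n. c0 / 2 < (LINT x:M|\<mu>s n. \<phi> x)) sequentially"
    by (rule order_tendstoD(1)[OF lim])
  have ev2: "eventually (\<lambda>n. beta \<delta> n < 1/2) sequentially"
    by (rule order_tendstoD(2)[OF beta_lim[OF d]]) simp
  have le1: "(LINT x:M|\<mu>s n. \<phi> x) \<le> measure (\<mu>s n) (Dset \<delta>)" for n
  proof (rule int_le_measure[OF mus(1) mus(2) ph01 _ Dset_B])
    fix x assume x: "x \<in> M" and "0 < \<phi> x"
    then have "0 < infdist (F x) M0 / \<delta> - 1" unfolding \<phi>_def by (simp add: max_def min_def split: if_splits)
    then have "\<delta> < infdist (F x) M0" using d by (simp add: field_simps)
    then show "x \<in> Dset \<delta>" using x unfolding Dset_def by simp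
  qed
  have "eventually (\<lambda>n. c0 / 4 \<le> lam n) sequentially"
    using ev1 ev2
  proof eventually_elim
    case (elim n)
    have a: "1/2 \<le> 1 - beta \<delta> n" using elim(2) by simp
    have b: "c0 / 2 \<le> measure (\<mu>s n) (Dset \<delta>)" using elim(1) le1[of n] by simp
    have "(1/2) * (c0 / 2) \<le> (1 - beta \<delta> n) * measure (\<mu>s n) (Dset \<delta>)"
      by (rule mult_mono[OF a b]) (use c0 a in auto)
    also have "\<dots> \<le> lam n" by (rule lam_ge[OF d])
    finally show ?case by simp
  qed
  then obtain N0 where "\<forall>n\<ge>N0. c0 / 4 \<le> lam n" unfolding eventually_sequentially by blast
  then show ?thesis using c0 by (intro exI[of _ "c0/4"]) auto
qed

end


context qsd_setting begin

lemma mu_bound: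
  assumes c: "c > 0" "\<forall>n\<ge>N0. c \<le> lam n" and r: "r > 0"
  shows "measure \<mu> {x \<in> M. 2 * r \<le> infdist x M0} = 0"
proof -
  obtain \<delta> k where d: "\<delta> > 0" and hk: "\<And>n. lam n ^ k * measure (\<mu>s n) (Bset r) \<le> real k * beta \<delta> n"
    using B_small[OF r] by blast
  define h where "h x = max 0 (min 1 (infdist x M0 / r - 1))" for x
  have hc: "continuous_on M h" unfolding h_def
    by (intro continuous_intros continuous_on_infdist continuous_on_id) (use r in auto)
  have h01: "\<And>x. x \<in> M \<Longrightarrow> 0 \<le> h x \<and> h x \<le> 1" unfolding h_def by auto
  have hle: "(LINT x:M|\<mu>s n. h x) \<le> measure (\<mu>s n) (Bset r)" for n
  proof (rule int_le_measure[OF mus(1) mus(2) h01 _ Bset_B(1)])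
    fix x assume x: "x \<in> M" and "0 < h x"
    then have "0 < infdist x M0 / r - 1" unfolding h_def by (simp add: max_def min_def split: if_splits)
    then have lt: "r < infdist x M0" using r by (simp add: field_simps)
    have "x \<notin> M0"
    proof
      assume "x \<in> M0" then have "infdist x M0 = 0" by (rule infdist_zero)
      then show False using lt r by simp
    qed
    then show "x \<in> Bset r" using x lt M1_def unfolding Bset_def by auto
  qed
  have hnn: "0 \<le> (LINT x:M|\<mu>s n. h x)" for n
    unfolding set_lebesgue_integral_def
    by (rule Bochner_Integration.integral_nonneg) (use h01 in \<open>auto simp: indicator_def\<close>)
  have ck: "c ^ k > 0" using c(1) by simp
  have Bb: "measure (\<mu>s n) (Bset r) \<le> real k * beta \<delta> n / c ^ k" if n: "n \<ge> N0" for n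
  proof -
    have "c ^ k \<le> lam n ^ k" using c n by (intro power_mono) auto
    then have "c ^ k * measure (\<mu>s n) (Bset r) \<le> lam n ^ k * measure (\<mu>s n) (Bset r)"
      by (rule mult_right_mono) simp
    also have "\<dots> \<le> real k * beta \<delta> n" by (rule hk)
    finally show ?thesis using ck by (simp add: pos_le_divide_eq mult.commute)
  qed
  have lim0: "(\<lambda>n. LINT x:M|\<mu>s n. h x) \<longlonglongrightarrow> 0"
  proof (rule tendsto_sandwich[of "\<lambda>_. 0" _ _ "\<lambda>n. real k * beta \<delta> n / c ^ k"])
    show "eventually (\<lambda>n. 0 \<le> (LINT x:M|\<mu>s n. h x)) sequentially" using hnn by simp
    show "eventually (\<lambda>n. (LINT x:M|\<mu>s n. h x) \<le> real k * beta \<delta> n / c ^ k) sequentially"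
      unfolding eventually_sequentially using hle Bb order_trans by blast
    show "((\<lambda>_. 0::real) \<longlongrightarrow> 0) sequentially" by simp
    have "(\<lambda>n. real k * beta \<delta> n / c ^ k) \<longlonglongrightarrow> real k * 0 / c ^ k"
      by (intro tendsto_intros beta_lim[OF d]) (use c(1) in simp)
    then show "(\<lambda>n. real k * beta \<delta> n / c ^ k) \<longlonglongrightarrow> 0" by simp
  qed
  have "bounded (h ` M)" unfolding bounded_iff using h01 by (intro exI[of _ 1]) auto
  then have lim: "(\<lambda>n. LINT x:M|\<mu>s n. h x) \<longlonglongrightarrow> (LINT x:M|\<mu>. h x)"
    using weak hc unfolding weak_conv_on_def by blast
  have z: "(LINT x:M|\<mu>. h x) = 0" using LIMSEQ_unique[OF lim lim0] .
  have "measure \<mu> {x \<in> M. 2 * r \<le> infdist x M0} \<le> (LINT x:M|\<mu>. h x)"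
  proof (rule measure_le_int[OF mu(1) mu(2) M_closed hc h01])
    fix x assume "x \<in> {x \<in> M. 2 * r \<le> infdist x M0}"
    then have "2 * r \<le> infdist x M0" by blast
    then have "2 \<le> infdist x M0 / r" using r by (simp add: pos_le_divide_eq)
    then show "h x = 1" unfolding h_def by simp
  qed auto
  then show ?thesis using z measure_nonneg[of \<mu>] by (simp add: order_antisym)
qed

lemma final: "measure \<mu> M0 = 1"
proof -
  have M1z: "measure \<mu> M1 = 0"
  proof (rule ccontr)
    assume ne: "measure \<mu> M1 \<noteq> 0"
    then obtain c N0 where c: "c > 0" "\<forall>n\<ge>N0. c \<le> lam n" using lam_lower by blast
    define E where "E m = {x \<in> M. 2 * (inverse (real (Suc m)) / 2) \<le> infdist x M0}" for m
    have E0: "measure \<mu> (E m) = 0" for m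
      unfolding E_def by (rule mu_bound[OF c]) simp
    have EB: "E m \<in> sets borel" for m
    proof -
      have "closed {x \<in> M. (\<lambda>_. 2 * (inverse (real (Suc m)) / 2)) x \<le> (\<lambda>x. infdist x M0) x}"
        by (rule continuous_on_closed_Collect_le)
          (auto intro: continuous_on_const continuous_on_infdist continuous_on_id M_closed)
      then show ?thesis unfolding E_def by simp
    qed
    have cov: "M1 \<subseteq> (\<Union>m. E m)"
    proof
      fix x assume x: "x \<in> M1"
      then have "0 < infdist x M0" using infdist_pos M1_def by blast
      then obtain m where "inverse (real (Suc m)) < infdist x M0" using reals_Archimedean by blast
      then have "x \<in> E m" using x M1M unfolding E_def by auto
      then show "x \<in> (\<Union>m. E m)" by blast
    qed
    have "measure \<mu> M1 = 0" by (rule null_cover[OF mu(1) mu(2) EB E0 M1B cov])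
    then show False using ne by simp
  qed
  interpret P: prob_space \<mu> by (rule mu(1))
  have sM: "M \<in> sets \<mu>" using mu(2) MB by simp
  have sM0: "M0 \<in> sets \<mu>" using mu(2) M0B by simp
  have "measure \<mu> M1 = measure \<mu> M - measure \<mu> M0"
    unfolding M1_def by (rule P.finite_measure_Diff[OF sM sM0 M0_sub])
  then show ?thesis using M1z mu(3) by simp
qed

end

theorem mainTheorem9:
  fixes M M0 M1 :: "'a::euclidean_space set"
    and F :: "'a \<Rightarrow> 'a"
    and p :: "real \<Rightarrow> 'a \<Rightarrow> 'a measure"
    and eps :: "nat \<Rightarrow> real" and lam :: "nat \<Rightarrow> real"
    and \<mu>s :: "nat \<Rightarrow> 'a measure" and \<mu> :: "'a measure"
  assumes M_closed: "closed M"
    and F_cont: "continuous_on M F" and F_into: "F ` M \<subseteq> M" and F_bdd: "bounded (F ` M)"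
    and kernels: "markov_kernels_on M p"
    and SH1: "\<And>\<delta>. \<delta> > 0 \<Longrightarrow>
       ((\<lambda>\<epsilon>. SUP x\<in>M. measure (p \<epsilon> x) (M - nbhd M \<delta> {F x})) \<longlongrightarrow> 0) (at_right 0)"
    and M0_closed: "closedin (top_of_set M) M0" and M0_sub: "M0 \<subseteq> M"
    and M1_def: "M1 = M - M0"
    and F_M0: "F ` M0 \<subseteq> M0" and F_M1: "F ` M1 \<subseteq> M1"
    and absorb: "\<And>\<epsilon> x. \<epsilon> > 0 \<Longrightarrow> x \<in> M0 \<Longrightarrow> measure (p \<epsilon> x) M1 = 0"
    and M0_compact: "compact M0"
    and M0_attr: "is_attractor M F M0"
    and M0_global: "\<And>x. x \<in> M \<Longrightarrow> omega_limit M F x \<subseteq> M0"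
    and eps_pos: "\<And>n. eps n > 0" and eps_dec: "decseq eps" and eps_lim: "eps \<longlonglongrightarrow> 0"
    and QSD: "\<And>n. is_QSD M1 (p (eps n)) (\<mu>s n) (lam n)"
    and mu_prob: "borel_prob_on M \<mu>"
    and weak: "weak_conv_on M \<mu>s \<mu>"
  shows "measure \<mu> M0 = 1"
proof -
  interpret qsd_setting M M0 M1 F p eps lam \<mu>s \<mu>
    by (rule qsd_setting.intro) (fact assms)+
  show ?thesis by (rule final)
qed

end
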